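(* Let $\mathcal T$ be a self-orthogonal subcategory of $\mathcal C$ and $n\ge0$. Then $\mathrm{Pres}^n(\mathcal T)=\mathrm{Pres}^n({}_{\mathcal T}\mathcal X)$.
   Context: $(\mathcal C,\mathbb E,\mathfrak s)$ is an extriangulated category in the sense of Nakaoka–Palu, Krull–Schmidt, with enough projectives and enough injectives; subcategories are full, additive, closed under isomorphisms. Higher extensions: $\mathbb E^1=\mathbb E$, $\mathbb E^{i+1}(X,Y)=\mathbb E(\Omega^iX,Y)\cong\mathbb E(X,\Sigma^iY)$. $\mathcal T$ is self-orthogonal if $\mathbb E^i(T_1,T_2)=0$ for all $i\ge1$, $T_1,T_2\in\mathcal T$. $\mathcal T^{\perp}=\{Y:\mathbb E^i(T,Y)=0\ \forall i\ge1,\forall T\in\mathcal T\}$. ${}_{\mathcal T}\mathcal X$ is the subcategory of objects $A$ for which there exist $\mathbb E$-triangles $K_{i+1}\to T_i\to K_i\dashrightarrow$ for all $i\ge0$ with $K_0=A$, $T_i\in\mathcal T$, $K_{i+1}\in\mathcal T^{\perp}$. For a subcategory $\mathcal S$, $\mathrm{Pres}^n(\mathcal S)$ is the subcategory of objects $A$ for which there exist $\mathbb E$-triangles $K_{i+1}\to S_i\to K_i\dashrightarrow$ for $1\le i\le n$ with $K_1=A$ and all $S_i\in\mathcal S$. *)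

theory Defs
  imports Main
begin

section \<open>Extriangulated categories (Nakaoka--Palu), encoded concretely\<close>

text \<open>Hom X A B is the set of morphisms A -> B (hom sets of different pairs are disjoint),
  cp X g f is the composite g o f, EE X C A is the abelian group E(C,A),
  push X a d = a_* d, pull X c d = c^* d, and rlz X d x y means that the
  sequence A -x-> B -y-> C belongs to the equivalence class s(d).\<close>

record ('o,'m,'e) extri_data =
  Obj   :: "'o set"
  Hom   :: "'o \<Rightarrow> 'o \<Rightarrow> 'm set"
  cp    :: "'m \<Rightarrow> 'm \<Rightarrow> 'm"
  idm   :: "'o \<Rightarrow> 'm"
  madd  :: "'m \<Rightarrow> 'm \<Rightarrow> 'm"
  mzero :: "'o \<Rightarrow> 'o \<Rightarrow> 'm"
  mneg  :: "'m \<Rightarrow> 'm"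
  EE    :: "'o \<Rightarrow> 'o \<Rightarrow> 'e set"
  eadd  :: "'e \<Rightarrow> 'e \<Rightarrow> 'e"
  ezero :: "'o \<Rightarrow> 'o \<Rightarrow> 'e"
  eneg  :: "'e \<Rightarrow> 'e"
  push  :: "'m \<Rightarrow> 'e \<Rightarrow> 'e"
  pull  :: "'m \<Rightarrow> 'e \<Rightarrow> 'e"
  rlz   :: "'e \<Rightarrow> 'm \<Rightarrow> 'm \<Rightarrow> bool"

definition abgroup_on :: "'a set \<Rightarrow> ('a \<Rightarrow> 'a \<Rightarrow> 'a) \<Rightarrow> 'a \<Rightarrow> ('a \<Rightarrow> 'a) \<Rightarrow> bool" where
  "abgroup_on G p z n \<longleftrightarrow> z \<in> G \<and> (\<forall>x\<in>G. \<forall>y\<in>G. p x y \<in> G) \<and> (\<forall>x\<in>G. n x \<in> G)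
     \<and> (\<forall>x\<in>G. \<forall>y\<in>G. \<forall>w\<in>G. p (p x y) w = p x (p y w))
     \<and> (\<forall>x\<in>G. \<forall>y\<in>G. p x y = p y x) \<and> (\<forall>x\<in>G. p z x = x) \<and> (\<forall>x\<in>G. p (n x) x = z)"

definition is_category :: "('o,'m,'e) extri_data \<Rightarrow> bool" where
  "is_category X \<longleftrightarrow>
     (\<forall>A B. (A \<notin> Obj X \<or> B \<notin> Obj X) \<longrightarrow> Hom X A B = {}) \<and>
     (\<forall>A B A' B' f. f \<in> Hom X A B \<longrightarrow> f \<in> Hom X A' B' \<longrightarrow> A = A' \<and> B = B') \<and>
     (\<forall>A\<in>Obj X. idm X A \<in> Hom X A A) \<and>
     (\<forall>A B C f g. f \<in> Hom X A B \<longrightarrow> g \<in> Hom X B C \<longrightarrow> cp X g f \<in> Hom X A C) \<and>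
     (\<forall>A B C D f g h. f \<in> Hom X A B \<longrightarrow> g \<in> Hom X B C \<longrightarrow> h \<in> Hom X C D \<longrightarrow>
        cp X h (cp X g f) = cp X (cp X h g) f) \<and>
     (\<forall>A B f. f \<in> Hom X A B \<longrightarrow> cp X (idm X B) f = f \<and> cp X f (idm X A) = f)"

definition is_iso :: "('o,'m,'e) extri_data \<Rightarrow> 'm \<Rightarrow> 'o \<Rightarrow> 'o \<Rightarrow> bool" where
  "is_iso X f A B \<longleftrightarrow> f \<in> Hom X A B \<and> (\<exists>g\<in>Hom X B A. cp X g f = idm X A \<and> cp X f g = idm X B)"

definition isomorphic :: "('o,'m,'e) extri_data \<Rightarrow> 'o \<Rightarrow> 'o \<Rightarrow> bool" where
  "isomorphic X A B \<longleftrightarrow> (\<exists>f. is_iso X f A B)"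

definition preadditive :: "('o,'m,'e) extri_data \<Rightarrow> bool" where
  "preadditive X \<longleftrightarrow> is_category X \<and>
     (\<forall>A\<in>Obj X. \<forall>B\<in>Obj X. abgroup_on (Hom X A B) (madd X) (mzero X A B) (mneg X)) \<and>
     (\<forall>A B C f f' g. f \<in> Hom X A B \<longrightarrow> f' \<in> Hom X A B \<longrightarrow> g \<in> Hom X B C \<longrightarrow>
        cp X g (madd X f f') = madd X (cp X g f) (cp X g f')) \<and>
     (\<forall>A B C f g g'. f \<in> Hom X A B \<longrightarrow> g \<in> Hom X B C \<longrightarrow> g' \<in> Hom X B C \<longrightarrow>
        cp X (madd X g g') f = madd X (cp X g f) (cp X g' f))"

definition is_zero_obj :: "('o,'m,'e) extri_data \<Rightarrow> 'o \<Rightarrow> bool" where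
  "is_zero_obj X Z \<longleftrightarrow> Z \<in> Obj X \<and> idm X Z = mzero X Z Z"

definition is_biprod :: "('o,'m,'e) extri_data \<Rightarrow> 'o \<Rightarrow> 'o \<Rightarrow> 'o \<Rightarrow> 'm \<Rightarrow> 'm \<Rightarrow> 'm \<Rightarrow> 'm \<Rightarrow> bool" where
  "is_biprod X A B S i1 i2 p1 p2 \<longleftrightarrow> S \<in> Obj X \<and>
     i1 \<in> Hom X A S \<and> i2 \<in> Hom X B S \<and> p1 \<in> Hom X S A \<and> p2 \<in> Hom X S B \<and>
     cp X p1 i1 = idm X A \<and> cp X p2 i2 = idm X B \<and>
     cp X p1 i2 = mzero X B A \<and> cp X p2 i1 = mzero X A B \<and>
     madd X (cp X i1 p1) (cp X i2 p2) = idm X S"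

definition additive_cat :: "('o,'m,'e) extri_data \<Rightarrow> bool" where
  "additive_cat X \<longleftrightarrow> preadditive X \<and> (\<exists>Z. is_zero_obj X Z) \<and>
     (\<forall>A\<in>Obj X. \<forall>B\<in>Obj X. \<exists>S i1 i2 p1 p2. is_biprod X A B S i1 i2 p1 p2)"

definition biadditive_E :: "('o,'m,'e) extri_data \<Rightarrow> bool" where
  "biadditive_E X \<longleftrightarrow>
     (\<forall>C A. (C \<notin> Obj X \<or> A \<notin> Obj X) \<longrightarrow> EE X C A = {}) \<and>
     (\<forall>C A C' A' d. d \<in> EE X C A \<longrightarrow> d \<in> EE X C' A' \<longrightarrow> C = C' \<and> A = A') \<and>
     (\<forall>C\<in>Obj X. \<forall>A\<in>Obj X. abgroup_on (EE X C A) (eadd X) (ezero X C A) (eneg X)) \<and>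
     (\<forall>C A A' a d. a \<in> Hom X A A' \<longrightarrow> d \<in> EE X C A \<longrightarrow> push X a d \<in> EE X C A') \<and>
     (\<forall>C C' A c d. c \<in> Hom X C' C \<longrightarrow> d \<in> EE X C A \<longrightarrow> pull X c d \<in> EE X C' A) \<and>
     (\<forall>C A d. d \<in> EE X C A \<longrightarrow> push X (idm X A) d = d \<and> pull X (idm X C) d = d) \<and>
     (\<forall>C A A' A'' a a' d. a \<in> Hom X A A' \<longrightarrow> a' \<in> Hom X A' A'' \<longrightarrow> d \<in> EE X C A \<longrightarrow>
        push X (cp X a' a) d = push X a' (push X a d)) \<and>
     (\<forall>C C' C'' A c c' d. c \<in> Hom X C' C \<longrightarrow> c' \<in> Hom X C'' C' \<longrightarrow> d \<in> EE X C A \<longrightarrow>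
        pull X (cp X c c') d = pull X c' (pull X c d)) \<and>
     (\<forall>C C' A A' a c d. a \<in> Hom X A A' \<longrightarrow> c \<in> Hom X C' C \<longrightarrow> d \<in> EE X C A \<longrightarrow>
        push X a (pull X c d) = pull X c (push X a d)) \<and>
     (\<forall>C A A' a d d'. a \<in> Hom X A A' \<longrightarrow> d \<in> EE X C A \<longrightarrow> d' \<in> EE X C A \<longrightarrow>
        push X a (eadd X d d') = eadd X (push X a d) (push X a d')) \<and>
     (\<forall>C C' A c d d'. c \<in> Hom X C' C \<longrightarrow> d \<in> EE X C A \<longrightarrow> d' \<in> EE X C A \<longrightarrow>
        pull X c (eadd X d d') = eadd X (pull X c d) (pull X c d')) \<and>
     (\<forall>C A A' a a' d. a \<in> Hom X A A' \<longrightarrow> a' \<in> Hom X A A' \<longrightarrow> d \<in> EE X C A \<longrightarrow>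
        push X (madd X a a') d = eadd X (push X a d) (push X a' d)) \<and>
     (\<forall>C C' A c c' d. c \<in> Hom X C' C \<longrightarrow> c' \<in> Hom X C' C \<longrightarrow> d \<in> EE X C A \<longrightarrow>
        pull X (madd X c c') d = eadd X (pull X c d) (pull X c' d))"

definition realization :: "('o,'m,'e) extri_data \<Rightarrow> bool" where
  "realization X \<longleftrightarrow>
     (\<forall>d x y. rlz X d x y \<longrightarrow> (\<exists>A B C. d \<in> EE X C A \<and> x \<in> Hom X A B \<and> y \<in> Hom X B C)) \<and>
     (\<forall>C A d. d \<in> EE X C A \<longrightarrow> (\<exists>B x y. x \<in> Hom X A B \<and> y \<in> Hom X B C \<and> rlz X d x y)) \<and>
     (\<forall>A B B' C d x y x' y'. d \<in> EE X C A \<longrightarrow> x \<in> Hom X A B \<longrightarrow> y \<in> Hom X B C \<longrightarrow> rlz X d x y \<longrightarrow>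
        x' \<in> Hom X A B' \<longrightarrow> y' \<in> Hom X B' C \<longrightarrow>
        (rlz X d x' y' \<longleftrightarrow> (\<exists>b. is_iso X b B B' \<and> cp X b x = x' \<and> cp X y' b = y))) \<and>
     (\<forall>A B C A' B' C' d d' x y x' y' a c.
        d \<in> EE X C A \<longrightarrow> x \<in> Hom X A B \<longrightarrow> y \<in> Hom X B C \<longrightarrow> rlz X d x y \<longrightarrow>
        d' \<in> EE X C' A' \<longrightarrow> x' \<in> Hom X A' B' \<longrightarrow> y' \<in> Hom X B' C' \<longrightarrow> rlz X d' x' y' \<longrightarrow>
        a \<in> Hom X A A' \<longrightarrow> c \<in> Hom X C C' \<longrightarrow> push X a d = pull X c d' \<longrightarrow>
        (\<exists>b\<in>Hom X B B'. cp X b x = cp X x' a \<and> cp X y' b = cp X c y))"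

definition additive_realization :: "('o,'m,'e) extri_data \<Rightarrow> bool" where
  "additive_realization X \<longleftrightarrow>
     (\<forall>A C S i1 i2 p1 p2. is_biprod X A C S i1 i2 p1 p2 \<longrightarrow> rlz X (ezero X C A) i1 p2) \<and>
     (\<forall>A B C A' B' C' d d' x y x' y' SA iA iA' pA pA' SB iB iB' pB pB' SC iC iC' pC pC'.
        d \<in> EE X C A \<longrightarrow> x \<in> Hom X A B \<longrightarrow> y \<in> Hom X B C \<longrightarrow> rlz X d x y \<longrightarrow>
        d' \<in> EE X C' A' \<longrightarrow> x' \<in> Hom X A' B' \<longrightarrow> y' \<in> Hom X B' C' \<longrightarrow> rlz X d' x' y' \<longrightarrow>
        is_biprod X A A' SA iA iA' pA pA' \<longrightarrow>
        is_biprod X B B' SB iB iB' pB pB' \<longrightarrow>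
        is_biprod X C C' SC iC iC' pC pC' \<longrightarrow>
        rlz X (eadd X (push X iA (pull X pC d)) (push X iA' (pull X pC' d')))
              (madd X (cp X iB (cp X x pA)) (cp X iB' (cp X x' pA')))
              (madd X (cp X iC (cp X y pB)) (cp X iC' (cp X y' pB'))))"

definition ET3 :: "('o,'m,'e) extri_data \<Rightarrow> bool" where
  "ET3 X \<longleftrightarrow>
     (\<forall>A B C A' B' C' d d' x y x' y' a b.
        d \<in> EE X C A \<longrightarrow> x \<in> Hom X A B \<longrightarrow> y \<in> Hom X B C \<longrightarrow> rlz X d x y \<longrightarrow>
        d' \<in> EE X C' A' \<longrightarrow> x' \<in> Hom X A' B' \<longrightarrow> y' \<in> Hom X B' C' \<longrightarrow> rlz X d' x' y' \<longrightarrow>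
        a \<in> Hom X A A' \<longrightarrow> b \<in> Hom X B B' \<longrightarrow> cp X b x = cp X x' a \<longrightarrow>
        (\<exists>c\<in>Hom X C C'. push X a d = pull X c d' \<and> cp X c y = cp X y' b))"

definition ET3op :: "('o,'m,'e) extri_data \<Rightarrow> bool" where
  "ET3op X \<longleftrightarrow>
     (\<forall>A B C A' B' C' d d' x y x' y' b c.
        d \<in> EE X C A \<longrightarrow> x \<in> Hom X A B \<longrightarrow> y \<in> Hom X B C \<longrightarrow> rlz X d x y \<longrightarrow>
        d' \<in> EE X C' A' \<longrightarrow> x' \<in> Hom X A' B' \<longrightarrow> y' \<in> Hom X B' C' \<longrightarrow> rlz X d' x' y' \<longrightarrow>
        b \<in> Hom X B B' \<longrightarrow> c \<in> Hom X C C' \<longrightarrow> cp X y' b = cp X c y \<longrightarrow>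
        (\<exists>a\<in>Hom X A A'. push X a d = pull X c d' \<and> cp X b x = cp X x' a))"

definition ET4 :: "('o,'m,'e) extri_data \<Rightarrow> bool" where
  "ET4 X \<longleftrightarrow>
     (\<forall>A B C D F f f' g g' d d'.
        d \<in> EE X D A \<longrightarrow> f \<in> Hom X A B \<longrightarrow> f' \<in> Hom X B D \<longrightarrow> rlz X d f f' \<longrightarrow>
        d' \<in> EE X F B \<longrightarrow> g \<in> Hom X B C \<longrightarrow> g' \<in> Hom X C F \<longrightarrow> rlz X d' g g' \<longrightarrow>
        (\<exists>E h h' dd e d''. E \<in> Obj X \<and> h \<in> Hom X A C \<and> h' \<in> Hom X C E \<and>
           dd \<in> Hom X D E \<and> e \<in> Hom X E F \<and> d'' \<in> EE X E A \<and> rlz X d'' h h' \<and>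
           h = cp X g f \<and> cp X dd f' = cp X h' g \<and> cp X e h' = g' \<and>
           rlz X (push X f' d') dd e \<and> pull X dd d'' = d \<and> push X f d'' = pull X e d'))"

definition ET4op :: "('o,'m,'e) extri_data \<Rightarrow> bool" where
  "ET4op X \<longleftrightarrow>
     (\<forall>D A B F C f' f g' g d d'.
        d \<in> EE X B D \<longrightarrow> f' \<in> Hom X D A \<longrightarrow> f \<in> Hom X A B \<longrightarrow> rlz X d f' f \<longrightarrow>
        d' \<in> EE X C F \<longrightarrow> g' \<in> Hom X F B \<longrightarrow> g \<in> Hom X B C \<longrightarrow> rlz X d' g' g \<longrightarrow>
        (\<exists>E dd e h' h d''. E \<in> Obj X \<and> dd \<in> Hom X D E \<and> e \<in> Hom X E F \<and>
           h' \<in> Hom X E A \<and> h \<in> Hom X A C \<and> d'' \<in> EE X C E \<and> rlz X d'' h' h \<and>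
           h = cp X g f \<and> cp X h' dd = f' \<and> cp X g' e = cp X f h' \<and>
           rlz X (pull X g' d) dd e \<and> d' = push X e d'' \<and> push X dd d = pull X g d''))"

definition extriangulated :: "('o,'m,'e) extri_data \<Rightarrow> bool" where
  "extriangulated X \<longleftrightarrow> additive_cat X \<and> biadditive_E X \<and> realization X \<and>
     additive_realization X \<and> ET3 X \<and> ET3op X \<and> ET4 X \<and> ET4op X"

definition etri :: "('o,'m,'e) extri_data \<Rightarrow> 'o \<Rightarrow> 'o \<Rightarrow> 'o \<Rightarrow> bool" where
  "etri X A B C \<longleftrightarrow> (\<exists>d x y. d \<in> EE X C A \<and> x \<in> Hom X A B \<and> y \<in> Hom X B C \<and> rlz X d x y)"

fun msum :: "('o,'m,'e) extri_data \<Rightarrow> 'o \<Rightarrow> 'o \<Rightarrow> (nat \<Rightarrow> 'm) \<Rightarrow> nat \<Rightarrow> 'm" where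
  "msum X A B fs 0 = mzero X A B"
| "msum X A B fs (Suc n) = madd X (msum X A B fs n) (fs n)"

definition local_end :: "('o,'m,'e) extri_data \<Rightarrow> 'o \<Rightarrow> bool" where
  "local_end X Y \<longleftrightarrow> Y \<in> Obj X \<and> idm X Y \<noteq> mzero X Y Y \<and>
     (\<forall>f\<in>Hom X Y Y. is_iso X f Y Y \<or> is_iso X (madd X (idm X Y) (mneg X f)) Y Y)"

definition is_dsum :: "('o,'m,'e) extri_data \<Rightarrow> 'o \<Rightarrow> nat \<Rightarrow> (nat \<Rightarrow> 'o) \<Rightarrow> (nat \<Rightarrow> 'm) \<Rightarrow> (nat \<Rightarrow> 'm) \<Rightarrow> bool" where
  "is_dsum X Y n Ys ins prs \<longleftrightarrow> Y \<in> Obj X \<and>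
     (\<forall>i<n. Ys i \<in> Obj X \<and> ins i \<in> Hom X (Ys i) Y \<and> prs i \<in> Hom X Y (Ys i)) \<and>
     (\<forall>i<n. \<forall>j<n. cp X (prs i) (ins j) = (if i = j then idm X (Ys i) else mzero X (Ys j) (Ys i))) \<and>
     msum X Y Y (\<lambda>i. cp X (ins i) (prs i)) n = idm X Y"

definition krull_schmidt :: "('o,'m,'e) extri_data \<Rightarrow> bool" where
  "krull_schmidt X \<longleftrightarrow> (\<forall>Y\<in>Obj X. \<exists>n Ys ins prs. is_dsum X Y n Ys ins prs \<and> (\<forall>i<n. local_end X (Ys i)))"

definition projective :: "('o,'m,'e) extri_data \<Rightarrow> 'o \<Rightarrow> bool" where
  "projective X P \<longleftrightarrow> P \<in> Obj X \<and>
     (\<forall>A B C d x y c. d \<in> EE X C A \<longrightarrow> x \<in> Hom X A B \<longrightarrow> y \<in> Hom X B C \<longrightarrow> rlz X d x y \<longrightarrow>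
        c \<in> Hom X P C \<longrightarrow> (\<exists>b\<in>Hom X P B. cp X y b = c))"

definition injective :: "('o,'m,'e) extri_data \<Rightarrow> 'o \<Rightarrow> bool" where
  "injective X I \<longleftrightarrow> I \<in> Obj X \<and>
     (\<forall>A B C d x y a. d \<in> EE X C A \<longrightarrow> x \<in> Hom X A B \<longrightarrow> y \<in> Hom X B C \<longrightarrow> rlz X d x y \<longrightarrow>
        a \<in> Hom X A I \<longrightarrow> (\<exists>b\<in>Hom X B I. cp X b x = a))"

definition enough_projectives :: "('o,'m,'e) extri_data \<Rightarrow> bool" where
  "enough_projectives X \<longleftrightarrow> (\<forall>C\<in>Obj X. \<exists>A P. projective X P \<and> etri X A P C)"

definition enough_injectives :: "('o,'m,'e) extri_data \<Rightarrow> bool" where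
  "enough_injectives X \<longleftrightarrow> (\<forall>A\<in>Obj X. \<exists>I C. injective X I \<and> etri X A I C)"

definition Omega :: "('o,'m,'e) extri_data \<Rightarrow> 'o \<Rightarrow> 'o" where
  "Omega X Y = (SOME K. K \<in> Obj X \<and> (\<exists>P. projective X P \<and> etri X K P Y))"

text \<open>Higher extensions: E^(i+1)(Y,Z) = E(Omega^i Y, Z); note EE X C A = E(C,A).\<close>
definition Ehi :: "('o,'m,'e) extri_data \<Rightarrow> nat \<Rightarrow> 'o \<Rightarrow> 'o \<Rightarrow> 'e set" where
  "Ehi X i Y Z = EE X ((Omega X ^^ (i - 1)) Y) Z"

definition Ehi_vanishes :: "('o,'m,'e) extri_data \<Rightarrow> nat \<Rightarrow> 'o \<Rightarrow> 'o \<Rightarrow> bool" where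
  "Ehi_vanishes X i Y Z \<longleftrightarrow> Ehi X i Y Z = {ezero X ((Omega X ^^ (i - 1)) Y) Z}"

text \<open>Full additive subcategory closed under isomorphisms, given by its class of objects.\<close>
definition subcat :: "('o,'m,'e) extri_data \<Rightarrow> 'o set \<Rightarrow> bool" where
  "subcat X T \<longleftrightarrow> T \<subseteq> Obj X \<and>
     (\<forall>A B. A \<in> T \<longrightarrow> isomorphic X A B \<longrightarrow> B \<in> T) \<and>
     (\<exists>Z\<in>T. is_zero_obj X Z) \<and>
     (\<forall>A B S i1 i2 p1 p2. A \<in> T \<longrightarrow> B \<in> T \<longrightarrow> is_biprod X A B S i1 i2 p1 p2 \<longrightarrow> S \<in> T)"

definition self_orthogonal :: "('o,'m,'e) extri_data \<Rightarrow> 'o set \<Rightarrow> bool" where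
  "self_orthogonal X T \<longleftrightarrow> (\<forall>i\<ge>1. \<forall>T1\<in>T. \<forall>T2\<in>T. Ehi_vanishes X i T1 T2)"

definition perp :: "('o,'m,'e) extri_data \<Rightarrow> 'o set \<Rightarrow> 'o set" where
  "perp X T = {Y \<in> Obj X. \<forall>i\<ge>1. \<forall>T1\<in>T. Ehi_vanishes X i T1 Y}"

definition TX :: "('o,'m,'e) extri_data \<Rightarrow> 'o set \<Rightarrow> 'o set" where
  "TX X T = {A \<in> Obj X. \<exists>K Ts. K 0 = A \<and>
      (\<forall>i. Ts i \<in> T \<and> K (Suc i) \<in> perp X T \<and> etri X (K (Suc i)) (Ts i) (K i))}"

definition Pres :: "('o,'m,'e) extri_data \<Rightarrow> nat \<Rightarrow> 'o set \<Rightarrow> 'o set" where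
  "Pres X n S = {A \<in> Obj X. \<exists>K Ss. K 1 = A \<and>
      (\<forall>i. 1 \<le> i \<and> i \<le> n \<longrightarrow> Ss i \<in> S \<and> etri X (K (Suc i)) (Ss i) (K i))}"

end

theory Submission
  imports Defs
begin

locale xt =
  fixes X :: "('o,'m,'e) extri_data"
  assumes ext: "extriangulated X"
begin

lemma addc: "additive_cat X" using ext by (simp add: extriangulated_def)
lemma preadd: "preadditive X" using addc by (simp add: additive_cat_def)
lemma cat: "is_category X" using preadd by (simp add: preadditive_def)
lemma bia: "biadditive_E X" using ext by (simp add: extriangulated_def)
lemma realz: "realization X" using ext by (simp add: extriangulated_def)
lemma areal: "additive_realization X" using ext by (simp add: extriangulated_def)
lemma et3: "ET3 X" using ext by (simp add: extriangulated_def)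
lemma et3op: "ET3op X" using ext by (simp add: extriangulated_def)
lemma et4: "ET4 X" using ext by (simp add: extriangulated_def)
lemma et4op: "ET4op X" using ext by (simp add: extriangulated_def)

lemma hom_obj: "f \<in> Hom X A B \<Longrightarrow> A \<in> Obj X \<and> B \<in> Obj X"
  using cat unfolding is_category_def by (metis empty_iff)
lemma id_hom: "A \<in> Obj X \<Longrightarrow> idm X A \<in> Hom X A A"
  using cat unfolding is_category_def by blast
lemma cp_hom: "f \<in> Hom X A B \<Longrightarrow> g \<in> Hom X B C \<Longrightarrow> cp X g f \<in> Hom X A C"
  using cat unfolding is_category_def by blast
lemma assoc: "f \<in> Hom X A B \<Longrightarrow> g \<in> Hom X B C \<Longrightarrow> h \<in> Hom X C D \<Longrightarrow>
        cp X h (cp X g f) = cp X (cp X h g) f"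
  using cat unfolding is_category_def by blast
lemma id_l: "f \<in> Hom X A B \<Longrightarrow> cp X (idm X B) f = f"
  using cat unfolding is_category_def by blast
lemma id_r: "f \<in> Hom X A B \<Longrightarrow> cp X f (idm X A) = f"
  using cat unfolding is_category_def by blast

lemma grp: "A \<in> Obj X \<Longrightarrow> B \<in> Obj X \<Longrightarrow> abgroup_on (Hom X A B) (madd X) (mzero X A B) (mneg X)"
  using preadd unfolding preadditive_def by blast
lemma dist_l: "f \<in> Hom X A B \<Longrightarrow> f' \<in> Hom X A B \<Longrightarrow> g \<in> Hom X B C \<Longrightarrow>
        cp X g (madd X f f') = madd X (cp X g f) (cp X g f')"
  using preadd unfolding preadditive_def by blast
lemma dist_r: "f \<in> Hom X A B \<Longrightarrow> g \<in> Hom X B C \<Longrightarrow> g' \<in> Hom X B C \<Longrightarrow>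
        cp X (madd X g g') f = madd X (cp X g f) (cp X g' f)"
  using preadd unfolding preadditive_def by blast

lemma madd_hom: "f \<in> Hom X A B \<Longrightarrow> g \<in> Hom X A B \<Longrightarrow> madd X f g \<in> Hom X A B"
  using grp hom_obj unfolding abgroup_on_def by blast
lemma mneg_hom: "f \<in> Hom X A B \<Longrightarrow> mneg X f \<in> Hom X A B"
  using grp hom_obj unfolding abgroup_on_def by blast
lemma mzero_hom: "A \<in> Obj X \<Longrightarrow> B \<in> Obj X \<Longrightarrow> mzero X A B \<in> Hom X A B"
  using grp unfolding abgroup_on_def by blast
lemma madd_assoc: "f \<in> Hom X A B \<Longrightarrow> g \<in> Hom X A B \<Longrightarrow> h \<in> Hom X A B \<Longrightarrow>
   madd X (madd X f g) h = madd X f (madd X g h)"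
  using grp hom_obj unfolding abgroup_on_def by blast
lemma madd_comm: "f \<in> Hom X A B \<Longrightarrow> g \<in> Hom X A B \<Longrightarrow> madd X f g = madd X g f"
  using grp hom_obj unfolding abgroup_on_def by blast
lemma madd_0l: "f \<in> Hom X A B \<Longrightarrow> madd X (mzero X A B) f = f"
  using grp hom_obj unfolding abgroup_on_def by blast
lemma madd_negl: "f \<in> Hom X A B \<Longrightarrow> madd X (mneg X f) f = mzero X A B"
  using grp hom_obj unfolding abgroup_on_def by blast
lemma madd_0r: "f \<in> Hom X A B \<Longrightarrow> madd X f (mzero X A B) = f"
  by (metis madd_0l madd_comm mzero_hom hom_obj)
lemma madd_negr: "f \<in> Hom X A B \<Longrightarrow> madd X f (mneg X f) = mzero X A B"
  by (metis madd_negl madd_comm mneg_hom)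

lemma inv_uniq: "a \<in> Hom X A B \<Longrightarrow> b \<in> Hom X A B \<Longrightarrow> madd X a b = mzero X A B \<Longrightarrow> a = mneg X b"
proof -
  assume h: "a \<in> Hom X A B" "b \<in> Hom X A B" "madd X a b = mzero X A B"
  have "a = madd X a (madd X b (mneg X b))" using h by (simp add: madd_negr madd_0r)
  also have "\<dots> = madd X (madd X a b) (mneg X b)" using madd_assoc[OF h(1) h(2) mneg_hom[OF h(2)]] by simp
  also have "\<dots> = mneg X b" using h by (simp add: madd_0l mneg_hom)
  finally show ?thesis .
qed

lemma idem_zero: "a \<in> Hom X A B \<Longrightarrow> madd X a a = a \<Longrightarrow> a = mzero X A B"
proof -
  assume h: "a \<in> Hom X A B" "madd X a a = a"
  have "mzero X A B = madd X (mneg X a) a" using h by (simp add: madd_negl)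
  also have "\<dots> = madd X (mneg X a) (madd X a a)" using h by simp
  also have "\<dots> = madd X (madd X (mneg X a) a) a" using madd_assoc[OF mneg_hom[OF h(1)] h(1) h(1)] by simp
  also have "\<dots> = a" using h by (simp add: madd_negl madd_0l)
  finally show ?thesis by simp
qed

lemma zero_zero: "A \<in> Obj X \<Longrightarrow> B \<in> Obj X \<Longrightarrow> madd X (mzero X A B) (mzero X A B) = mzero X A B"
  by (simp add: madd_0l mzero_hom)

lemma cp_zero_r: "g \<in> Hom X B C \<Longrightarrow> A \<in> Obj X \<Longrightarrow> cp X g (mzero X A B) = mzero X A C"
proof -
  assume h: "g \<in> Hom X B C" "A \<in> Obj X"
  then have B: "B \<in> Obj X" "C \<in> Obj X" using hom_obj by auto
  have z: "mzero X A B \<in> Hom X A B" using h B mzero_hom by auto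
  have "cp X g (mzero X A B) = cp X g (madd X (mzero X A B) (mzero X A B))"
    using h B zero_zero by simp
  also have "\<dots> = madd X (cp X g (mzero X A B)) (cp X g (mzero X A B))"
    using dist_l[OF z z h(1)] .
  finally show ?thesis using idem_zero cp_hom[OF z h(1)] by metis
qed

lemma cp_zero_l: "f \<in> Hom X A B \<Longrightarrow> C \<in> Obj X \<Longrightarrow> cp X (mzero X B C) f = mzero X A C"
proof -
  assume h: "f \<in> Hom X A B" "C \<in> Obj X"
  then have B: "A \<in> Obj X" "B \<in> Obj X" using hom_obj by auto
  have z: "mzero X B C \<in> Hom X B C" using h B mzero_hom by auto
  have "cp X (mzero X B C) f = cp X (madd X (mzero X B C) (mzero X B C)) f"
    using h B zero_zero by simp
  also have "\<dots> = madd X (cp X (mzero X B C) f) (cp X (mzero X B C) f)"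
    using dist_r[OF h(1) z z] .
  finally show ?thesis using idem_zero cp_hom[OF h(1) z] by metis
qed

lemma neg_zero: "A \<in> Obj X \<Longrightarrow> B \<in> Obj X \<Longrightarrow> mneg X (mzero X A B) = mzero X A B"
  by (metis inv_uniq mzero_hom zero_zero)

lemma cp_neg_r: "f \<in> Hom X A B \<Longrightarrow> g \<in> Hom X B C \<Longrightarrow> cp X g (mneg X f) = mneg X (cp X g f)"
proof -
  assume h: "f \<in> Hom X A B" "g \<in> Hom X B C"
  have "madd X (cp X g (mneg X f)) (cp X g f) = cp X g (madd X (mneg X f) f)"
    using dist_l[OF mneg_hom[OF h(1)] h(1) h(2)] by simp
  also have "\<dots> = mzero X A C" using h by (simp add: madd_negl cp_zero_r hom_obj)
  finally show ?thesis using inv_uniq cp_hom mneg_hom h by metis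
qed

lemma cp_neg_l: "f \<in> Hom X A B \<Longrightarrow> g \<in> Hom X B C \<Longrightarrow> cp X (mneg X g) f = mneg X (cp X g f)"
proof -
  assume h: "f \<in> Hom X A B" "g \<in> Hom X B C"
  have "madd X (cp X (mneg X g) f) (cp X g f) = cp X (madd X (mneg X g) g) f"
    using dist_r[OF h(1) mneg_hom[OF h(2)] h(2)] by simp
  also have "\<dots> = mzero X A C" using h by (simp add: madd_negl cp_zero_l hom_obj)
  finally show ?thesis using inv_uniq cp_hom mneg_hom h by metis
qed

end

context xt begin

lemma ee_obj: "d \<in> EE X C A \<Longrightarrow> C \<in> Obj X \<and> A \<in> Obj X"
  using bia unfolding biadditive_E_def by (metis empty_iff)
lemma egrp: "C \<in> Obj X \<Longrightarrow> A \<in> Obj X \<Longrightarrow> abgroup_on (EE X C A) (eadd X) (ezero X C A) (eneg X)"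
  using bia unfolding biadditive_E_def by simp
lemma push_ee: "a \<in> Hom X A A' \<Longrightarrow> d \<in> EE X C A \<Longrightarrow> push X a d \<in> EE X C A'"
  using bia unfolding biadditive_E_def by simp
lemma pull_ee: "c \<in> Hom X C' C \<Longrightarrow> d \<in> EE X C A \<Longrightarrow> pull X c d \<in> EE X C' A"
  using bia unfolding biadditive_E_def by simp
lemma push_id: "d \<in> EE X C A \<Longrightarrow> push X (idm X A) d = d"
  using bia unfolding biadditive_E_def by simp
lemma pull_id: "d \<in> EE X C A \<Longrightarrow> pull X (idm X C) d = d"
  using bia unfolding biadditive_E_def by simp
lemma push_cp: "a \<in> Hom X A A' \<Longrightarrow> a' \<in> Hom X A' A'' \<Longrightarrow> d \<in> EE X C A \<Longrightarrow>
        push X (cp X a' a) d = push X a' (push X a d)"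
  using bia unfolding biadditive_E_def by simp
lemma pull_cp: "c \<in> Hom X C' C \<Longrightarrow> c' \<in> Hom X C'' C' \<Longrightarrow> d \<in> EE X C A \<Longrightarrow>
        pull X (cp X c c') d = pull X c' (pull X c d)"
  using bia unfolding biadditive_E_def by simp
lemma push_pull: "a \<in> Hom X A A' \<Longrightarrow> c \<in> Hom X C' C \<Longrightarrow> d \<in> EE X C A \<Longrightarrow>
        push X a (pull X c d) = pull X c (push X a d)"
  using bia unfolding biadditive_E_def by simp
lemma push_eadd: "a \<in> Hom X A A' \<Longrightarrow> d \<in> EE X C A \<Longrightarrow> d' \<in> EE X C A \<Longrightarrow>
        push X a (eadd X d d') = eadd X (push X a d) (push X a d')"
  using bia unfolding biadditive_E_def by simp
lemma pull_eadd: "c \<in> Hom X C' C \<Longrightarrow> d \<in> EE X C A \<Longrightarrow> d' \<in> EE X C A \<Longrightarrow>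
        pull X c (eadd X d d') = eadd X (pull X c d) (pull X c d')"
  using bia unfolding biadditive_E_def by simp
lemma push_madd: "a \<in> Hom X A A' \<Longrightarrow> a' \<in> Hom X A A' \<Longrightarrow> d \<in> EE X C A \<Longrightarrow>
        push X (madd X a a') d = eadd X (push X a d) (push X a' d)"
  using bia unfolding biadditive_E_def by simp
lemma pull_madd: "c \<in> Hom X C' C \<Longrightarrow> c' \<in> Hom X C' C \<Longrightarrow> d \<in> EE X C A \<Longrightarrow>
        pull X (madd X c c') d = eadd X (pull X c d) (pull X c' d)"
  using bia unfolding biadditive_E_def by simp

lemma eadd_ee: "d \<in> EE X C A \<Longrightarrow> d' \<in> EE X C A \<Longrightarrow> eadd X d d' \<in> EE X C A"
  using egrp ee_obj unfolding abgroup_on_def by blast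
lemma eneg_ee: "d \<in> EE X C A \<Longrightarrow> eneg X d \<in> EE X C A"
  using egrp ee_obj unfolding abgroup_on_def by blast
lemma ezero_ee: "C \<in> Obj X \<Longrightarrow> A \<in> Obj X \<Longrightarrow> ezero X C A \<in> EE X C A"
  using egrp unfolding abgroup_on_def by blast
lemma eadd_assoc: "f \<in> EE X C A \<Longrightarrow> g \<in> EE X C A \<Longrightarrow> h \<in> EE X C A \<Longrightarrow>
   eadd X (eadd X f g) h = eadd X f (eadd X g h)"
  using egrp ee_obj unfolding abgroup_on_def by blast
lemma eadd_comm: "f \<in> EE X C A \<Longrightarrow> g \<in> EE X C A \<Longrightarrow> eadd X f g = eadd X g f"
  using egrp ee_obj unfolding abgroup_on_def by blast
lemma eadd_0l: "f \<in> EE X C A \<Longrightarrow> eadd X (ezero X C A) f = f"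
  using egrp ee_obj unfolding abgroup_on_def by blast
lemma eadd_negl: "f \<in> EE X C A \<Longrightarrow> eadd X (eneg X f) f = ezero X C A"
  using egrp ee_obj unfolding abgroup_on_def by blast

lemma e_idem_zero: "a \<in> EE X C A \<Longrightarrow> eadd X a a = a \<Longrightarrow> a = ezero X C A"
proof -
  assume h: "a \<in> EE X C A" "eadd X a a = a"
  have "ezero X C A = eadd X (eneg X a) a" using h by (simp add: eadd_negl)
  also have "\<dots> = eadd X (eneg X a) (eadd X a a)" using h by simp
  also have "\<dots> = eadd X (eadd X (eneg X a) a) a" using eadd_assoc[OF eneg_ee[OF h(1)] h(1) h(1)] by simp
  also have "\<dots> = a" using h by (simp add: eadd_negl eadd_0l)
  finally show ?thesis by simp
qed

lemma push_zero: "A \<in> Obj X \<Longrightarrow> A' \<in> Obj X \<Longrightarrow> d \<in> EE X C A \<Longrightarrow> push X (mzero X A A') d = ezero X C A'"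
proof -
  assume h: "A \<in> Obj X" "A' \<in> Obj X" "d \<in> EE X C A"
  have z: "mzero X A A' \<in> Hom X A A'" using h mzero_hom by auto
  have "push X (mzero X A A') d = push X (madd X (mzero X A A') (mzero X A A')) d"
    using h zero_zero by simp
  also have "\<dots> = eadd X (push X (mzero X A A') d) (push X (mzero X A A') d)"
    using push_madd[OF z z h(3)] .
  finally show ?thesis using e_idem_zero push_ee[OF z h(3)] by metis
qed

lemma pull_zero: "C \<in> Obj X \<Longrightarrow> C' \<in> Obj X \<Longrightarrow> d \<in> EE X C A \<Longrightarrow> pull X (mzero X C' C) d = ezero X C' A"
proof -
  assume h: "C \<in> Obj X" "C' \<in> Obj X" "d \<in> EE X C A"
  have z: "mzero X C' C \<in> Hom X C' C" using h mzero_hom by auto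
  have "pull X (mzero X C' C) d = pull X (madd X (mzero X C' C) (mzero X C' C)) d"
    using h zero_zero by simp
  also have "\<dots> = eadd X (pull X (mzero X C' C) d) (pull X (mzero X C' C) d)"
    using pull_madd[OF z z h(3)] .
  finally show ?thesis using e_idem_zero pull_ee[OF z h(3)] by metis
qed

lemma e_inv_uniq: "a \<in> EE X C A \<Longrightarrow> b \<in> EE X C A \<Longrightarrow> eadd X a b = ezero X C A \<Longrightarrow> a = eneg X b"
proof -
  assume h: "a \<in> EE X C A" "b \<in> EE X C A" "eadd X a b = ezero X C A"
  have nb: "eadd X b (eneg X b) = ezero X C A" using h eadd_negl eadd_comm eneg_ee by metis
  have "a = eadd X a (ezero X C A)" using h eadd_0l eadd_comm ezero_ee ee_obj by metis
  also have "\<dots> = eadd X a (eadd X b (eneg X b))" using nb by simp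
  also have "\<dots> = eadd X (eadd X a b) (eneg X b)" using eadd_assoc[OF h(1) h(2) eneg_ee[OF h(2)]] by simp
  also have "\<dots> = eneg X b" using h by (simp add: eadd_0l eneg_ee)
  finally show ?thesis .
qed

lemma pull_eneg: "c \<in> Hom X C' C \<Longrightarrow> d \<in> EE X C A \<Longrightarrow> pull X c (eneg X d) = eneg X (pull X c d)"
proof -
  assume h: "c \<in> Hom X C' C" "d \<in> EE X C A"
  have "eadd X (pull X c (eneg X d)) (pull X c d) = pull X c (eadd X (eneg X d) d)"
    using pull_eadd[OF h(1) eneg_ee[OF h(2)] h(2)] by simp
  also have "\<dots> = pull X c (ezero X C A)" using h eadd_negl by simp
  also have "\<dots> = ezero X C' A"
  proof -
    have "pull X c (ezero X C A) = pull X c (push X (mzero X A A) d)"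
      using h push_zero ee_obj by metis
    also have "\<dots> = push X (mzero X A A) (pull X c d)"
      using push_pull[OF mzero_hom h(1) h(2)] h ee_obj by metis
    also have "\<dots> = ezero X C' A" using push_zero ee_obj pull_ee h by metis
    finally show ?thesis .
  qed
  finally show ?thesis using e_inv_uniq pull_ee eneg_ee h by metis
qed

end

context xt begin

lemma assocR: "f \<in> Hom X A B \<Longrightarrow> g \<in> Hom X B C \<Longrightarrow> h \<in> Hom X C D \<Longrightarrow>
        cp X (cp X h g) f = cp X h (cp X g f)"
  using assoc by metis

lemma rlz_homs: "rlz X d x y \<Longrightarrow> \<exists>A B C. d \<in> EE X C A \<and> x \<in> Hom X A B \<and> y \<in> Hom X B C"
  using realz[unfolded realization_def, THEN conjunct1] by blast
lemma realize: "d \<in> EE X C A \<Longrightarrow> \<exists>B x y. x \<in> Hom X A B \<and> y \<in> Hom X B C \<and> rlz X d x y"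
  using realz[unfolded realization_def, THEN conjunct2, THEN conjunct1] by blast
lemma rlz_iso: "d \<in> EE X C A \<Longrightarrow> x \<in> Hom X A B \<Longrightarrow> y \<in> Hom X B C \<Longrightarrow> rlz X d x y \<Longrightarrow>
        x' \<in> Hom X A B' \<Longrightarrow> y' \<in> Hom X B' C \<Longrightarrow>
        rlz X d x' y' \<longleftrightarrow> (\<exists>b. is_iso X b B B' \<and> cp X b x = x' \<and> cp X y' b = y)"
  using realz[unfolded realization_def, THEN conjunct2, THEN conjunct2, THEN conjunct1] by blast
lemma rlz_mor: "d \<in> EE X C A \<Longrightarrow> x \<in> Hom X A B \<Longrightarrow> y \<in> Hom X B C \<Longrightarrow> rlz X d x y \<Longrightarrow>
        d' \<in> EE X C' A' \<Longrightarrow> x' \<in> Hom X A' B' \<Longrightarrow> y' \<in> Hom X B' C' \<Longrightarrow> rlz X d' x' y' \<Longrightarrow>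
        a \<in> Hom X A A' \<Longrightarrow> c \<in> Hom X C C' \<Longrightarrow> push X a d = pull X c d' \<Longrightarrow>
        (\<exists>b\<in>Hom X B B'. cp X b x = cp X x' a \<and> cp X y' b = cp X c y)"
  using realz[unfolded realization_def, THEN conjunct2, THEN conjunct2, THEN conjunct2] by blast

lemma et2_split: "is_biprod X A C S i1 i2 p1 p2 \<Longrightarrow> rlz X (ezero X C A) i1 p2"
  using areal[unfolded additive_realization_def, THEN conjunct1] by blast

lemma et2_sum: "d \<in> EE X C A \<Longrightarrow> x \<in> Hom X A B \<Longrightarrow> y \<in> Hom X B C \<Longrightarrow> rlz X d x y \<Longrightarrow>
        d' \<in> EE X C' A' \<Longrightarrow> x' \<in> Hom X A' B' \<Longrightarrow> y' \<in> Hom X B' C' \<Longrightarrow> rlz X d' x' y' \<Longrightarrow>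
        is_biprod X A A' SA iA iA' pA pA' \<Longrightarrow>
        is_biprod X B B' SB iB iB' pB pB' \<Longrightarrow>
        is_biprod X C C' SC iC iC' pC pC' \<Longrightarrow>
        rlz X (eadd X (push X iA (pull X pC d)) (push X iA' (pull X pC' d')))
              (madd X (cp X iB (cp X x pA)) (cp X iB' (cp X x' pA')))
              (madd X (cp X iC (cp X y pB)) (cp X iC' (cp X y' pB')))"
  by (rule areal[unfolded additive_realization_def, THEN conjunct2, rule_format])

lemma ET3: "d \<in> EE X C A \<Longrightarrow> x \<in> Hom X A B \<Longrightarrow> y \<in> Hom X B C \<Longrightarrow> rlz X d x y \<Longrightarrow>
        d' \<in> EE X C' A' \<Longrightarrow> x' \<in> Hom X A' B' \<Longrightarrow> y' \<in> Hom X B' C' \<Longrightarrow> rlz X d' x' y' \<Longrightarrow>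
        a \<in> Hom X A A' \<Longrightarrow> b \<in> Hom X B B' \<Longrightarrow> cp X b x = cp X x' a \<Longrightarrow>
        (\<exists>c\<in>Hom X C C'. push X a d = pull X c d' \<and> cp X c y = cp X y' b)"
  using et3 [unfolded ET3_def] by blast
lemma ET3op: "d \<in> EE X C A \<Longrightarrow> x \<in> Hom X A B \<Longrightarrow> y \<in> Hom X B C \<Longrightarrow> rlz X d x y \<Longrightarrow>
        d' \<in> EE X C' A' \<Longrightarrow> x' \<in> Hom X A' B' \<Longrightarrow> y' \<in> Hom X B' C' \<Longrightarrow> rlz X d' x' y' \<Longrightarrow>
        b \<in> Hom X B B' \<Longrightarrow> c \<in> Hom X C C' \<Longrightarrow> cp X y' b = cp X c y \<Longrightarrow>
        (\<exists>a\<in>Hom X A A'. push X a d = pull X c d' \<and> cp X b x = cp X x' a)"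
  using et3op [unfolded ET3op_def] by blast
lemma ET4: "d \<in> EE X D A \<Longrightarrow> f \<in> Hom X A B \<Longrightarrow> f' \<in> Hom X B D \<Longrightarrow> rlz X d f f' \<Longrightarrow>
        d' \<in> EE X F B \<Longrightarrow> g \<in> Hom X B C \<Longrightarrow> g' \<in> Hom X C F \<Longrightarrow> rlz X d' g g' \<Longrightarrow>
        (\<exists>E h h' dd e d''. E \<in> Obj X \<and> h \<in> Hom X A C \<and> h' \<in> Hom X C E \<and>
           dd \<in> Hom X D E \<and> e \<in> Hom X E F \<and> d'' \<in> EE X E A \<and> rlz X d'' h h' \<and>
           h = cp X g f \<and> cp X dd f' = cp X h' g \<and> cp X e h' = g' \<and>
           rlz X (push X f' d') dd e \<and> pull X dd d'' = d \<and> push X f d'' = pull X e d')"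
  using et4 [unfolded ET4_def] by blast
lemma ET4op: "d \<in> EE X B D \<Longrightarrow> f' \<in> Hom X D A \<Longrightarrow> f \<in> Hom X A B \<Longrightarrow> rlz X d f' f \<Longrightarrow>
        d' \<in> EE X C F \<Longrightarrow> g' \<in> Hom X F B \<Longrightarrow> g \<in> Hom X B C \<Longrightarrow> rlz X d' g' g \<Longrightarrow>
        (\<exists>E dd e h' h d''. E \<in> Obj X \<and> dd \<in> Hom X D E \<and> e \<in> Hom X E F \<and>
           h' \<in> Hom X E A \<and> h \<in> Hom X A C \<and> d'' \<in> EE X C E \<and> rlz X d'' h' h \<and>
           h = cp X g f \<and> cp X h' dd = f' \<and> cp X g' e = cp X f h' \<and>
           rlz X (pull X g' d) dd e \<and> d' = push X e d'' \<and> push X dd d = pull X g d'')"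
  using et4op [unfolded ET4op_def] by blast

lemma biprod_ex: "A \<in> Obj X \<Longrightarrow> B \<in> Obj X \<Longrightarrow> \<exists>S i1 i2 p1 p2. is_biprod X A B S i1 i2 p1 p2"
  using addc unfolding additive_cat_def by blast

end

context xt begin

lemma zero_ex: "\<exists>Z. is_zero_obj X Z" using addc unfolding additive_cat_def by blast

lemma biprod_Z1: "is_zero_obj X Z \<Longrightarrow> A \<in> Obj X \<Longrightarrow>
   is_biprod X A Z A (idm X A) (mzero X Z A) (idm X A) (mzero X A Z)"
proof -
  assume Z: "is_zero_obj X Z" and A: "A \<in> Obj X"
  have ZO: "Z \<in> Obj X" "idm X Z = mzero X Z Z" using Z unfolding is_zero_obj_def by auto
  show ?thesis unfolding is_biprod_def
    using A ZO id_hom[OF A] mzero_hom[OF A ZO(1)] mzero_hom[OF ZO(1) A] id_l[OF id_hom[OF A]]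
      id_l[OF mzero_hom[OF ZO(1) A]] id_r[OF mzero_hom[OF A ZO(1)]] cp_zero_l[OF mzero_hom[OF ZO(1) A] ZO(1)]
      cp_zero_l[OF mzero_hom[OF A ZO(1)] A] madd_0r[OF id_hom[OF A]] by simp
qed

lemma biprod_Z2: "is_zero_obj X Z \<Longrightarrow> A \<in> Obj X \<Longrightarrow>
   is_biprod X Z A A (mzero X Z A) (idm X A) (mzero X A Z) (idm X A)"
proof -
  assume Z: "is_zero_obj X Z" and A: "A \<in> Obj X"
  have ZO: "Z \<in> Obj X" "idm X Z = mzero X Z Z" using Z unfolding is_zero_obj_def by auto
  show ?thesis unfolding is_biprod_def
    using A ZO id_hom[OF A] mzero_hom[OF A ZO(1)] mzero_hom[OF ZO(1) A] id_l[OF id_hom[OF A]]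
      id_l[OF mzero_hom[OF ZO(1) A]] id_r[OF mzero_hom[OF A ZO(1)]] cp_zero_l[OF mzero_hom[OF ZO(1) A] ZO(1)]
      cp_zero_l[OF mzero_hom[OF A ZO(1)] A] madd_0l[OF id_hom[OF A]] by simp
qed

lemma tri_zero: "d \<in> EE X C A \<Longrightarrow> x \<in> Hom X A B \<Longrightarrow> y \<in> Hom X B C \<Longrightarrow> rlz X d x y \<Longrightarrow>
   cp X y x = mzero X A C"
proof -
  assume h: "d \<in> EE X C A" "x \<in> Hom X A B" "y \<in> Hom X B C" "rlz X d x y"
  obtain Z where Z: "is_zero_obj X Z" using zero_ex by blast
  have A: "A \<in> Obj X" "C \<in> Obj X" using h hom_obj by auto
  have ZO: "Z \<in> Obj X" using Z unfolding is_zero_obj_def by auto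
  have r: "rlz X (ezero X Z A) (idm X A) (mzero X A Z)" using et2_split[OF biprod_Z1[OF Z A(1)]] .
  have "\<exists>c\<in>Hom X Z C. push X (idm X A) (ezero X Z A) = pull X c d \<and> cp X c (mzero X A Z) = cp X y x"
    apply (rule ET3[OF ezero_ee[OF ZO A(1)] id_hom[OF A(1)] mzero_hom[OF A(1) ZO] r h(1) h(2) h(3) h(4) id_hom[OF A(1)] h(2)])
    using h by (simp add: id_r)
  then obtain c where c: "c \<in> Hom X Z C" "cp X c (mzero X A Z) = cp X y x" by blast
  show ?thesis using c cp_zero_r[OF c(1) A(1)] by simp
qed

lemma is_isoD: "is_iso X f A B \<Longrightarrow> \<exists>g\<in>Hom X B A. cp X g f = idm X A \<and> cp X f g = idm X B"
  unfolding is_iso_def by blast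
lemma is_iso_hom: "is_iso X f A B \<Longrightarrow> f \<in> Hom X A B"
  unfolding is_iso_def by blast

lemma split_biprod:
  assumes x: "x \<in> Hom X A B" and y: "y \<in> Hom X B C" and r: "rlz X (ezero X C A) x y"
  shows "\<exists>i2 p1. is_biprod X A C B x i2 p1 y"
proof -
  have A: "A \<in> Obj X" "C \<in> Obj X" "B \<in> Obj X" using x y hom_obj by auto
  obtain S i1 i2 p1 p2 where bp: "is_biprod X A C S i1 i2 p1 p2" using biprod_ex A by blast
  then have bpf: "S \<in> Obj X" "i1 \<in> Hom X A S" "i2 \<in> Hom X C S" "p1 \<in> Hom X S A" "p2 \<in> Hom X S C"
     "cp X p1 i1 = idm X A" "cp X p2 i2 = idm X C" "cp X p1 i2 = mzero X C A" "cp X p2 i1 = mzero X A C"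
     "madd X (cp X i1 p1) (cp X i2 p2) = idm X S" unfolding is_biprod_def by auto
  have r0: "rlz X (ezero X C A) i1 p2" using et2_split[OF bp] .
  obtain \<phi> where ph: "is_iso X \<phi> S B" "cp X \<phi> i1 = x" "cp X y \<phi> = p2"
    using rlz_iso[OF ezero_ee[OF A(2) A(1)] bpf(2) bpf(5) r0 x y] r by blast
  obtain \<psi> where ps: "\<psi> \<in> Hom X B S" "cp X \<psi> \<phi> = idm X S" "cp X \<phi> \<psi> = idm X B"
    using is_isoD[OF ph(1)] by blast
  have phh: "\<phi> \<in> Hom X S B" using ph is_iso_hom by auto
  define I2 where "I2 = cp X \<phi> i2"
  define P1 where "P1 = cp X p1 \<psi>"
  have I2h: "I2 \<in> Hom X C B" unfolding I2_def using cp_hom bpf phh by blast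
  have P1h: "P1 \<in> Hom X B A" unfolding P1_def using cp_hom bpf ps by blast
  have yeq: "y = cp X p2 \<psi>"
  proof -
    have "y = cp X y (cp X \<phi> \<psi>)" using ps y id_r by simp
    also have "\<dots> = cp X (cp X y \<phi>) \<psi>" using assoc[OF ps(1) phh y] .
    finally show ?thesis using ph by simp
  qed
  have xe: "x = cp X \<phi> i1" using ph by simp
  have psph: "\<And>f D. f \<in> Hom X D S \<Longrightarrow> cp X \<psi> (cp X \<phi> f) = f"
    using assoc ps phh id_l by metis
  have e1: "cp X P1 x = idm X A" unfolding P1_def xe
    using assocR[OF _ ps(1) bpf(4), of "cp X \<phi> i1"] cp_hom[OF bpf(2) phh] psph[OF bpf(2)] bpf by simp
  have e2: "cp X y I2 = idm X C" unfolding I2_def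
    using assoc[OF bpf(3) phh y] ph bpf by simp
  have e3: "cp X P1 I2 = mzero X C A" unfolding P1_def I2_def
    using assocR[OF _ ps(1) bpf(4), of "cp X \<phi> i2"] cp_hom[OF bpf(3) phh] psph[OF bpf(3)] bpf by simp
  have e4: "cp X y x = mzero X A C" unfolding xe
    using assoc[OF bpf(2) phh y] ph bpf by simp
  have e5: "madd X (cp X x P1) (cp X I2 y) = idm X B"
  proof -
    have u: "cp X i1 p1 \<in> Hom X S S" "cp X i2 p2 \<in> Hom X S S" using cp_hom bpf by blast+
    have a1: "cp X x P1 = cp X \<phi> (cp X (cp X i1 p1) \<psi>)" unfolding xe P1_def
      using assocR[OF _ bpf(2) phh, of "cp X p1 \<psi>"] assoc[OF ps(1) bpf(4) bpf(2)] cp_hom[OF ps(1) bpf(4)] by simp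
    have a2: "cp X I2 y = cp X \<phi> (cp X (cp X i2 p2) \<psi>)" unfolding yeq I2_def
      using assocR[OF _ bpf(3) phh, of "cp X p2 \<psi>"] assoc[OF ps(1) bpf(5) bpf(3)] cp_hom[OF ps(1) bpf(5)] by simp
    have "madd X (cp X x P1) (cp X I2 y) = cp X \<phi> (madd X (cp X (cp X i1 p1) \<psi>) (cp X (cp X i2 p2) \<psi>))"
      unfolding a1 a2 using dist_l[OF cp_hom[OF ps(1) u(1)] cp_hom[OF ps(1) u(2)] phh] by simp
    also have "\<dots> = cp X \<phi> (cp X (madd X (cp X i1 p1) (cp X i2 p2)) \<psi>)"
      using dist_r[OF ps(1) u] by simp
    also have "\<dots> = idm X B" using bpf ps id_l by simp
    finally show ?thesis .
  qed
  have "is_biprod X A C B x I2 P1 y" unfolding is_biprod_def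
    using A x y I2h P1h e1 e2 e3 e4 e5 by simp
  then show ?thesis by blast
qed

lemma exact_pull:
  assumes th: "\<theta> \<in> EE X C A1" and d2: "\<delta> \<in> EE X C A2" and x2: "x2 \<in> Hom X A2 B2"
    and y2: "y2 \<in> Hom X B2 C" and r2: "rlz X \<delta> x2 y2"
    and z: "pull X y2 \<theta> = ezero X B2 A1"
  shows "\<exists>\<phi>\<in>Hom X A2 A1. push X \<phi> \<delta> = \<theta>"
proof -
  have O: "A1 \<in> Obj X" "B2 \<in> Obj X" "C \<in> Obj X" "A2 \<in> Obj X" using th x2 y2 hom_obj ee_obj by auto
  obtain B xt yt where t: "xt \<in> Hom X A1 B" "yt \<in> Hom X B C" "rlz X \<theta> xt yt" using realize[OF th] by blast
  obtain P i1 i2 p1 p2 where bp: "is_biprod X A1 B2 P i1 i2 p1 p2" using biprod_ex O by blast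
  then have bpf: "P \<in> Obj X" "i1 \<in> Hom X A1 P" "i2 \<in> Hom X B2 P" "p1 \<in> Hom X P A1" "p2 \<in> Hom X P B2"
     "cp X p2 i2 = idm X B2" unfolding is_biprod_def by auto
  have r0: "rlz X (ezero X B2 A1) i1 p2" using et2_split[OF bp] .
  have "\<exists>b\<in>Hom X P B. cp X b i1 = cp X xt (idm X A1) \<and> cp X yt b = cp X y2 p2"
    apply (rule rlz_mor[OF ezero_ee[OF O(2) O(1)] bpf(2) bpf(5) r0 th t id_hom[OF O(1)] y2])
    using push_id[OF ezero_ee[OF O(2) O(1)]] z by simp
  then obtain b where b: "b \<in> Hom X P B" "cp X yt b = cp X y2 p2" by blast
  define w where "w = cp X b i2"
  have wh: "w \<in> Hom X B2 B" unfolding w_def using cp_hom bpf b by blast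
  have yw: "cp X yt w = cp X (idm X C) y2"
    unfolding w_def using assoc[OF bpf(3) b(1) t(2)] b(2) assocR[OF bpf(3) bpf(5) y2] bpf(6) id_r[OF y2] id_l[OF y2] by simp
  obtain a where a: "a \<in> Hom X A2 A1" "push X a \<delta> = pull X (idm X C) \<theta>"
    using ET3op[OF d2 x2 y2 r2 th t wh id_hom[OF O(3)] yw] by blast
  show ?thesis using a pull_id[OF th] by auto
qed

end

context xt begin

lemma adjust_biprod:
  assumes bp: "is_biprod X F L E0 dd s r e" and ph: "\<phi> \<in> Hom X L F"
  shows "is_biprod X L F E0 (madd X s (mneg X (cp X dd \<phi>))) dd e (madd X r (cp X \<phi> e))"
proof -
  from bp have b: "E0 \<in> Obj X" "dd \<in> Hom X F E0" "s \<in> Hom X L E0" "r \<in> Hom X E0 F" "e \<in> Hom X E0 L"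
     "cp X r dd = idm X F" "cp X e s = idm X L" "cp X r s = mzero X L F" "cp X e dd = mzero X F L"
     "madd X (cp X dd r) (cp X s e) = idm X E0" unfolding is_biprod_def by auto
  have O: "F \<in> Obj X" "L \<in> Obj X" using ph hom_obj by auto
  define X1 where "X1 = cp X dd \<phi>"
  have X1h: "X1 \<in> Hom X L E0" unfolding X1_def using cp_hom ph b by blast
  have pe: "cp X \<phi> e \<in> Hom X E0 F" using cp_hom ph b by blast
  define s' where "s' = madd X s (mneg X X1)"
  define r' where "r' = madd X r (cp X \<phi> e)"
  have s'h: "s' \<in> Hom X L E0" unfolding s'_def using madd_hom mneg_hom X1h b by blast
  have r'h: "r' \<in> Hom X E0 F" unfolding r'_def using madd_hom pe b by blast
  have eX1: "cp X e X1 = mzero X L L" unfolding X1_def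
    using assoc[OF ph b(2) b(5)] b(9) cp_zero_l[OF ph O(2)] by simp
  have rX1: "cp X r X1 = \<phi>" unfolding X1_def
    using assoc[OF ph b(2) b(4)] b(6) id_l[OF ph] by simp
  have c1: "cp X e s' = idm X L" unfolding s'_def
    using dist_l[OF b(3) mneg_hom[OF X1h] b(5)] cp_neg_r[OF X1h b(5)] eX1 b(7) neg_zero[OF O(2) O(2)]
      madd_0r[OF id_hom[OF O(2)]] by simp
  have c2: "cp X r' dd = idm X F" unfolding r'_def
    using dist_r[OF b(2) b(4) pe] assocR[OF b(2) b(5) ph] b(6) b(9) cp_zero_r[OF ph O(1)]
      madd_0r[OF id_hom[OF O(1)]] by simp
  have c4: "cp X r' s' = mzero X L F"
  proof -
    have rs': "cp X r s' = mneg X \<phi>" unfolding s'_def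
      using dist_l[OF b(3) mneg_hom[OF X1h] b(4)] cp_neg_r[OF X1h b(4)] rX1 b(8) madd_0l[OF mneg_hom[OF ph]] by simp
    have ps': "cp X (cp X \<phi> e) s' = \<phi>"
      using assocR[OF s'h b(5) ph] c1 id_r[OF ph] by simp
    show ?thesis unfolding r'_def using dist_r[OF s'h b(4) pe] rs' ps' madd_negl[OF ph] by simp
  qed
  have c5: "madd X (cp X s' e) (cp X dd r') = idm X E0"
  proof -
    define Y where "Y = cp X X1 e"
    have Yh: "Y \<in> Hom X E0 E0" unfolding Y_def using cp_hom X1h b by blast
    have se: "cp X s e \<in> Hom X E0 E0" "cp X dd r \<in> Hom X E0 E0" using cp_hom b by blast+
    have a1: "cp X s' e = madd X (cp X s e) (mneg X Y)" unfolding s'_def Y_def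
      using dist_r[OF b(5) b(3) mneg_hom[OF X1h]] cp_neg_l[OF b(5) X1h] by simp
    have a2: "cp X dd r' = madd X (cp X dd r) Y" unfolding r'_def Y_def X1_def
      using dist_l[OF b(4) pe b(2)] assoc[OF b(5) ph b(2)] by simp
    have "madd X (madd X (cp X s e) (mneg X Y)) (madd X (cp X dd r) Y)
        = madd X (cp X s e) (madd X (mneg X Y) (madd X (cp X dd r) Y))"
      using madd_assoc[OF se(1) mneg_hom[OF Yh] madd_hom[OF se(2) Yh]] .
    also have "madd X (mneg X Y) (madd X (cp X dd r) Y) = madd X (madd X (mneg X Y) (cp X dd r)) Y"
      using madd_assoc[OF mneg_hom[OF Yh] se(2) Yh] by simp
    also have "madd X (mneg X Y) (cp X dd r) = madd X (cp X dd r) (mneg X Y)"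
      using madd_comm[OF mneg_hom[OF Yh] se(2)] .
    also have "madd X (madd X (cp X dd r) (mneg X Y)) Y = madd X (cp X dd r) (madd X (mneg X Y) Y)"
      using madd_assoc[OF se(2) mneg_hom[OF Yh] Yh] .
    also have "\<dots> = cp X dd r" using madd_negl[OF Yh] madd_0r[OF se(2)] by simp
    also have "madd X (cp X s e) (cp X dd r) = idm X E0" using madd_comm[OF se] b(10) by simp
    finally show ?thesis using a1 a2 by simp
  qed
  show ?thesis unfolding is_biprod_def
    using b s'h r'h c1 c2 c4 c5 unfolding s'_def[symmetric] r'_def[symmetric] X1_def[symmetric] by simp
qed

end

context xt begin

lemma eadd_negr: "f \<in> EE X C A \<Longrightarrow> eadd X f (eneg X f) = ezero X C A"
  by (metis eadd_negl eadd_comm eneg_ee)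

lemma etriI: "d \<in> EE X C A \<Longrightarrow> x \<in> Hom X A B \<Longrightarrow> y \<in> Hom X B C \<Longrightarrow> rlz X d x y \<Longrightarrow> etri X A B C"
  unfolding etri_def by blast

lemma horseshoe:
  assumes sub: "subcat X T"
  and d1: "\<delta>1 \<in> EE X K L" "x1 \<in> Hom X L E" "y1 \<in> Hom X E K" "rlz X \<delta>1 x1 y1"
  and d2: "\<delta>2 \<in> EE X K F" "x2 \<in> Hom X F B2" "y2 \<in> Hom X B2 K" "rlz X \<delta>2 x2 y2" "B2 \<in> T"
  and d3: "etri X L'' TL L" "TL \<in> T"
  and perpL: "\<forall>N\<in>T. EE X N L = {ezero X N L}"
  shows "\<exists>S G. S \<in> T \<and> etri X G S E \<and> etri X L'' G F"
proof -
  have O: "K \<in> Obj X" "L \<in> Obj X" "E \<in> Obj X" "F \<in> Obj X" "B2 \<in> Obj X"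
    using d1 d2 hom_obj by auto
  have pd: "pull X y1 \<delta>2 \<in> EE X E F" using pull_ee d1 d2 by blast
  obtain M m2 e2 where m: "m2 \<in> Hom X F M" "e2 \<in> Hom X M E" "rlz X (pull X y1 \<delta>2) m2 e2"
    using realize[OF pd] by blast
  obtain E0 dd e h' h d'' where o4: "E0 \<in> Obj X" "dd \<in> Hom X F E0" "e \<in> Hom X E0 L"
    "h' \<in> Hom X E0 M" "h \<in> Hom X M K" "d'' \<in> EE X K E0" "rlz X d'' h' h"
    "h = cp X y1 e2" "cp X h' dd = m2" "cp X x1 e = cp X e2 h'"
    "rlz X (pull X x1 (pull X y1 \<delta>2)) dd e" "\<delta>1 = push X e d''"
    "push X dd (pull X y1 \<delta>2) = pull X y1 d''"
    using ET4op[OF pd m(1) m(2) m(3) d1(1) d1(2) d1(3) d1(4)] by blast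
  have "pull X x1 (pull X y1 \<delta>2) = ezero X L F"
    using pull_cp[OF d1(3) d1(2) d2(1), symmetric] tri_zero[OF d1] pull_zero[OF O(1) O(2) d2(1)] by simp
  then have r0: "rlz X (ezero X L F) dd e" using o4(11) by simp
  obtain s r where bp: "is_biprod X F L E0 dd s r e" using split_biprod[OF o4(2) o4(3) r0] by blast
  then have bpf: "s \<in> Hom X L E0" "r \<in> Hom X E0 F" "cp X r dd = idm X F"
    unfolding is_biprod_def by auto
  define P where "P = push X r d''"
  have Pe: "P \<in> EE X K F" unfolding P_def using push_ee bpf o4 by blast
  define \<theta> where "\<theta> = eadd X \<delta>2 (eneg X P)"
  have the: "\<theta> \<in> EE X K F" unfolding \<theta>_def using eadd_ee eneg_ee Pe d2 by blast
  have pP: "pull X y1 P = pull X y1 \<delta>2" unfolding P_def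
    using push_pull[OF bpf(2) d1(3) o4(6), symmetric] o4(13)[symmetric]
      push_cp[OF o4(2) bpf(2) pd, symmetric] bpf(3) push_id[OF pd] by simp
  have zt: "pull X y1 \<theta> = ezero X E F" unfolding \<theta>_def
    using pull_eadd[OF d1(3) d2(1) eneg_ee[OF Pe]] pull_eneg[OF d1(3) Pe] pP eadd_negr[OF pd] by simp
  obtain \<phi> where ph: "\<phi> \<in> Hom X L F" "push X \<phi> \<delta>1 = \<theta>"
    using exact_pull[OF the d1(1) d1(2) d1(3) d1(4) zt] by blast
  define s' where "s' = madd X s (mneg X (cp X dd \<phi>))"
  define r' where "r' = madd X r (cp X \<phi> e)"
  have bp2: "is_biprod X L F E0 s' dd e r'" unfolding s'_def r'_def using adjust_biprod[OF bp ph(1)] .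
  then have s'h: "s' \<in> Hom X L E0" and r'h: "r' \<in> Hom X E0 F" unfolding is_biprod_def by auto
  have pr': "push X r' d'' = \<delta>2"
  proof -
    have pe: "cp X \<phi> e \<in> Hom X E0 F" using cp_hom ph o4 by blast
    have "push X r' d'' = eadd X P (push X \<phi> (push X e d''))"
      unfolding r'_def P_def using push_madd[OF bpf(2) pe o4(6)] push_cp[OF o4(3) ph(1) o4(6)] by simp
    also have "\<dots> = eadd X P (eadd X (eneg X P) \<delta>2)"
      using o4(12)[symmetric] ph(2) eadd_comm[OF d2(1) eneg_ee[OF Pe]] unfolding \<theta>_def by simp
    also have "\<dots> = \<delta>2" using eadd_assoc[OF Pe eneg_ee[OF Pe] d2(1), symmetric] eadd_negr[OF Pe] eadd_0l[OF d2(1)] by simp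
    finally show ?thesis .
  qed
  have rs: "rlz X (ezero X F L) s' r'" using et2_split[OF bp2] .
  obtain N H H' dd2 e2' d3' where o5: "N \<in> Obj X" "H \<in> Hom X L M" "H' \<in> Hom X M N"
    "dd2 \<in> Hom X F N" "e2' \<in> Hom X N K" "d3' \<in> EE X N L" "rlz X d3' H H'"
    "rlz X (push X r' d'') dd2 e2'"
    using ET4[OF ezero_ee[OF O(4) O(2)] s'h r'h rs o4(6) o4(4) o4(5) o4(7)] by blast
  have "\<exists>b. is_iso X b B2 N \<and> cp X b x2 = dd2 \<and> cp X e2' b = y2"
    using rlz_iso[OF d2(1) d2(2) d2(3) d2(4) o5(4) o5(5)] o5(8) pr' by simp
  then have "isomorphic X B2 N" unfolding isomorphic_def by blast
  then have NT: "N \<in> T" using sub d2(5) unfolding subcat_def by blast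
  have "d3' = ezero X N L" using o5(6) perpL NT by blast
  then obtain i2M p1M where bpM: "is_biprod X L N M H i2M p1M H'"
    using split_biprod[OF o5(2) o5(3)] o5(7) by blast
  obtain dL fL gL where tL: "dL \<in> EE X L L''" "fL \<in> Hom X L'' TL" "gL \<in> Hom X TL L" "rlz X dL fL gL"
    using d3 unfolding etri_def by blast
  obtain Z where Z: "Z \<in> T" "is_zero_obj X Z" using sub unfolding subcat_def by blast
  have ZO: "Z \<in> Obj X" using Z unfolding is_zero_obj_def by auto
  have TLO: "TL \<in> Obj X" "L'' \<in> Obj X" using tL hom_obj by auto
  obtain S iB iB' pB pB' where bS: "is_biprod X TL N S iB iB' pB pB'" using biprod_ex TLO o5 by blast
  have ST: "S \<in> T" using sub bS d3(2) NT unfolding subcat_def by blast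
  have bZ: "is_biprod X Z N N (mzero X Z N) (idm X N) (mzero X N Z) (idm X N)"
    using biprod_Z2[OF Z(2) o5(1)] .
  have rZ: "rlz X (ezero X N Z) (mzero X Z N) (idm X N)" using et2_split[OF bZ] .
  have bA: "is_biprod X L'' Z L'' (idm X L'') (mzero X Z L'') (idm X L'') (mzero X L'' Z)"
    using biprod_Z1[OF Z(2) TLO(2)] .
  have bSf: "iB \<in> Hom X TL S" "iB' \<in> Hom X N S" "pB \<in> Hom X S TL" "pB' \<in> Hom X S N"
    using bS unfolding is_biprod_def by auto
  have bMf: "i2M \<in> Hom X N M" "p1M \<in> Hom X M L" using bpM unfolding is_biprod_def by auto
  define \<epsilon> where "\<epsilon> = eadd X (push X (idm X L'') (pull X p1M dL)) (push X (mzero X Z L'') (pull X H' (ezero X N Z)))"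
  define \<iota> where "\<iota> = madd X (cp X iB (cp X fL (idm X L''))) (cp X iB' (cp X (mzero X Z N) (mzero X L'' Z)))"
  define \<pi> where "\<pi> = madd X (cp X H (cp X gL pB)) (cp X i2M (cp X (idm X N) pB'))"
  have rS: "rlz X \<epsilon> \<iota> \<pi>" unfolding \<epsilon>_def \<iota>_def \<pi>_def
    using et2_sum[OF tL(1) tL(2) tL(3) tL(4) ezero_ee[OF o5(1) ZO] mzero_hom[OF ZO o5(1)] id_hom[OF o5(1)] rZ bA bS bpM] .
  have epe: "\<epsilon> \<in> EE X M L''" unfolding \<epsilon>_def
    by (meson eadd_ee push_ee pull_ee id_hom mzero_hom ZO TLO bMf o5 tL ezero_ee)
  have ioh: "\<iota> \<in> Hom X L'' S" unfolding \<iota>_def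
    by (meson madd_hom cp_hom id_hom mzero_hom ZO TLO bSf o5 tL)
  have pih: "\<pi> \<in> Hom X S M" unfolding \<pi>_def
    by (meson madd_hom cp_hom id_hom bSf bMf o5 tL)
  obtain G ddG eG hG' hG d4 where o6: "G \<in> Obj X" "ddG \<in> Hom X L'' G" "eG \<in> Hom X G F"
    "hG' \<in> Hom X G S" "hG \<in> Hom X S E" "d4 \<in> EE X E G" "rlz X d4 hG' hG"
    "rlz X (pull X m2 \<epsilon>) ddG eG"
    using ET4op[OF epe ioh pih rS pd m(1) m(2) m(3)] by blast
  have "etri X G S E" using etriI[OF o6(6) o6(4) o6(5) o6(7)] .
  moreover have "etri X L'' G F" using etriI[OF pull_ee[OF m(1) epe] o6(2) o6(3) o6(8)] .
  ultimately show ?thesis using ST by blast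
qed

end

context xt begin

lemma etri_obj: "etri X A B C \<Longrightarrow> A \<in> Obj X \<and> B \<in> Obj X \<and> C \<in> Obj X"
  unfolding etri_def using hom_obj by blast

lemma Pres_0: "Pres X 0 S = Obj X" unfolding Pres_def by auto

lemma Pres_Suc: "A \<in> Pres X (Suc n) S \<longleftrightarrow>
   A \<in> Obj X \<and> (\<exists>K2 S1. S1 \<in> S \<and> etri X K2 S1 A \<and> K2 \<in> Pres X n S)"
proof
  assume "A \<in> Pres X (Suc n) S"
  then obtain K Ss where A: "A \<in> Obj X" "K 1 = A"
    and h: "\<And>i. 1 \<le> i \<Longrightarrow> i \<le> Suc n \<Longrightarrow> Ss i \<in> S \<and> etri X (K (Suc i)) (Ss i) (K i)"
    unfolding Pres_def by blast
  have 1: "Ss 1 \<in> S" "etri X (K 2) (Ss 1) A" using h[of 1] A by (auto simp: numeral_2_eq_2)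
  have "K 2 \<in> Pres X n S" unfolding Pres_def
  proof (intro CollectI conjI exI)
    show "K 2 \<in> Obj X" using 1 etri_obj by blast
    show "(\<lambda>i. K (Suc i)) 1 = K 2" by (simp add: numeral_2_eq_2)
    show "\<forall>i. 1 \<le> i \<and> i \<le> n \<longrightarrow> (\<lambda>i. Ss (Suc i)) i \<in> S \<and>
        etri X ((\<lambda>i. K (Suc i)) (Suc i)) ((\<lambda>i. Ss (Suc i)) i) ((\<lambda>i. K (Suc i)) i)"
      using h by auto
  qed
  then show "A \<in> Obj X \<and> (\<exists>K2 S1. S1 \<in> S \<and> etri X K2 S1 A \<and> K2 \<in> Pres X n S)"
    using A 1 by blast
next
  assume "A \<in> Obj X \<and> (\<exists>K2 S1. S1 \<in> S \<and> etri X K2 S1 A \<and> K2 \<in> Pres X n S)"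
  then obtain K2 S1 K' Ss' where A: "A \<in> Obj X" "S1 \<in> S" "etri X K2 S1 A" "K' 1 = K2"
    and h: "\<forall>i. 1 \<le> i \<and> i \<le> n \<longrightarrow> Ss' i \<in> S \<and> etri X (K' (Suc i)) (Ss' i) (K' i)"
    unfolding Pres_def by blast
  define K where "K i = (if i \<le> 1 then A else K' (i - 1))" for i
  define Ss where "Ss i = (if i = 1 then S1 else Ss' (i - 1))" for i
  show "A \<in> Pres X (Suc n) S" unfolding Pres_def
  proof (intro CollectI conjI exI)
    show "A \<in> Obj X" by fact
    show "K 1 = A" unfolding K_def by simp
    show "\<forall>i. 1 \<le> i \<and> i \<le> Suc n \<longrightarrow> Ss i \<in> S \<and> etri X (K (Suc i)) (Ss i) (K i)"
    proof (intro allI impI)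
      fix i assume i: "1 \<le> i \<and> i \<le> Suc n"
      show "Ss i \<in> S \<and> etri X (K (Suc i)) (Ss i) (K i)"
      proof (cases "i = 1")
        case True then show ?thesis using A unfolding K_def Ss_def by simp
      next
        case False
        then have "1 \<le> i - 1" "i - 1 \<le> n" using i by auto
        then have "Ss' (i - 1) \<in> S \<and> etri X (K' (Suc (i - 1))) (Ss' (i - 1)) (K' (i - 1))" using h by blast
        moreover have "Suc (i - 1) = i" using i False by auto
        ultimately show ?thesis using False i unfolding K_def Ss_def by auto
      qed
    qed
  qed
qed

lemma Pres_mono: "S \<subseteq> S' \<Longrightarrow> Pres X n S \<subseteq> Pres X n S'"
  unfolding Pres_def by blast

definition good :: "'o set \<Rightarrow> 'o \<Rightarrow> bool" where
  "good T L \<longleftrightarrow> (\<exists>K Ts. K 0 = L \<and> (\<forall>i. Ts i \<in> T \<and> K i \<in> perp X T \<and> etri X (K (Suc i)) (Ts i) (K i)))"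

lemma good_step: "good T L \<Longrightarrow> L \<in> perp X T \<and> (\<exists>L'' TL. TL \<in> T \<and> etri X L'' TL L \<and> good T L'')"
proof -
  assume "good T L"
  then obtain K Ts where h: "K 0 = L" "\<forall>i. Ts i \<in> T \<and> K i \<in> perp X T \<and> etri X (K (Suc i)) (Ts i) (K i)"
    unfolding good_def by blast
  have "good T (K 1)" unfolding good_def
    apply (rule exI[of _ "\<lambda>i. K (Suc i)"], rule exI[of _ "\<lambda>i. Ts (Suc i)"]) using h by auto
  then show ?thesis using h by (metis One_nat_def)
qed

lemma TX_step: "X1 \<in> TX X T \<Longrightarrow> \<exists>L T0. T0 \<in> T \<and> etri X L T0 X1 \<and> good T L"
proof -
  assume "X1 \<in> TX X T"
  then obtain K Ts where h: "K 0 = X1" "\<forall>i. Ts i \<in> T \<and> K (Suc i) \<in> perp X T \<and> etri X (K (Suc i)) (Ts i) (K i)"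
    unfolding TX_def by blast
  have "good T (K 1)" unfolding good_def
    apply (rule exI[of _ "\<lambda>i. K (Suc i)"], rule exI[of _ "\<lambda>i. Ts (Suc i)"]) using h by auto
  then show ?thesis using h by (metis One_nat_def)
qed

lemma perp_EE: "L \<in> perp X T \<Longrightarrow> \<forall>N\<in>T. EE X N L = {ezero X N L}"
  unfolding perp_def Ehi_vanishes_def Ehi_def by auto

lemma Q: assumes sub: "subcat X T"
  shows "\<forall>E L K. good T L \<longrightarrow> K \<in> Pres X m T \<longrightarrow> etri X L E K \<longrightarrow> E \<in> Pres X m T"
proof (induction m)
  case 0 then show ?case using etri_obj Pres_0 by blast
next
  case (Suc m)
  show ?case
  proof (intro allI impI)
    fix E L K assume g: "good T L" and K: "K \<in> Pres X (Suc m) T" and t: "etri X L E K"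
    obtain F B2 where k: "B2 \<in> T" "etri X F B2 K" "F \<in> Pres X m T" using K Pres_Suc by blast
    obtain L'' TL where l: "TL \<in> T" "etri X L'' TL L" "good T L''" "L \<in> perp X T" using good_step[OF g] by blast
    obtain d1 x1 y1 where t1: "d1 \<in> EE X K L" "x1 \<in> Hom X L E" "y1 \<in> Hom X E K" "rlz X d1 x1 y1"
      using t unfolding etri_def by blast
    obtain d2 x2 y2 where t2: "d2 \<in> EE X K F" "x2 \<in> Hom X F B2" "y2 \<in> Hom X B2 K" "rlz X d2 x2 y2"
      using k unfolding etri_def by blast
    obtain S G where sg: "S \<in> T" "etri X G S E" "etri X L'' G F"
      using horseshoe[OF sub t1 t2 k(1) l(2) l(1) perp_EE[OF l(4)]] by blast
    have "G \<in> Pres X m T" using Suc.IH l(3) k(3) sg(3) by blast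
    then show "E \<in> Pres X (Suc m) T" using Pres_Suc sg etri_obj by blast
  qed
qed

lemma main_sup: assumes sub: "subcat X T"
  shows "Pres X n (TX X T) \<subseteq> Pres X n T"
proof (induction n)
  case 0 then show ?case using Pres_0 by simp
next
  case (Suc n)
  show ?case
  proof
    fix A assume "A \<in> Pres X (Suc n) (TX X T)"
    then obtain K2 X1 where a: "A \<in> Obj X" "X1 \<in> TX X T" "etri X K2 X1 A" "K2 \<in> Pres X n (TX X T)"
      using Pres_Suc by blast
    have K2: "K2 \<in> Pres X n T" using Suc.IH a(4) by blast
    obtain L T0 where l: "T0 \<in> T" "etri X L T0 X1" "good T L" using TX_step[OF a(2)] by blast
    obtain d f' f where t1: "d \<in> EE X X1 L" "f' \<in> Hom X L T0" "f \<in> Hom X T0 X1" "rlz X d f' f"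
      using l unfolding etri_def by blast
    obtain d' g' g where t2: "d' \<in> EE X A K2" "g' \<in> Hom X K2 X1" "g \<in> Hom X X1 A" "rlz X d' g' g"
      using a unfolding etri_def by blast
    obtain E dd e h' h d'' where o: "E \<in> Obj X" "dd \<in> Hom X L E" "e \<in> Hom X E K2"
           "h' \<in> Hom X E T0" "h \<in> Hom X T0 A" "d'' \<in> EE X A E" "rlz X d'' h' h"
           "rlz X (pull X g' d) dd e"
      using ET4op[OF t1 t2] by blast
    have "etri X L E K2" using etriI[OF pull_ee[OF t2(2) t1(1)] o(2) o(3) o(8)] .
    then have "E \<in> Pres X n T" using Q[OF sub] l(3) K2 by blast
    moreover have "etri X E T0 A" using etriI[OF o(6) o(4) o(5) o(7)] .
    ultimately show "A \<in> Pres X (Suc n) T" using Pres_Suc a(1) l(1) by blast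
  qed
qed

lemma Omega_obj: "enough_projectives X \<Longrightarrow> Y \<in> Obj X \<Longrightarrow> Omega X Y \<in> Obj X"
proof -
  assume ep: "enough_projectives X" and Y: "Y \<in> Obj X"
  then obtain A P where "projective X P" "etri X A P Y" unfolding enough_projectives_def by blast
  then have "\<exists>K. K \<in> Obj X \<and> (\<exists>P. projective X P \<and> etri X K P Y)" using etri_obj by blast
  from someI_ex[OF this] show ?thesis unfolding Omega_def by blast
qed

lemma Omega_pow_obj: "enough_projectives X \<Longrightarrow> Y \<in> Obj X \<Longrightarrow> (Omega X ^^ k) Y \<in> Obj X"
  by (induction k) (auto simp: Omega_obj)

lemma EE_zero: "is_zero_obj X Z \<Longrightarrow> Y \<in> Obj X \<Longrightarrow> EE X Y Z = {ezero X Y Z}"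
proof -
  assume Z: "is_zero_obj X Z" and Y: "Y \<in> Obj X"
  have ZO: "Z \<in> Obj X" "idm X Z = mzero X Z Z" using Z unfolding is_zero_obj_def by auto
  have "\<And>d. d \<in> EE X Y Z \<Longrightarrow> d = ezero X Y Z"
    using push_id push_zero ZO by metis
  then show ?thesis using ezero_ee[OF Y ZO(1)] by blast
qed

lemma main_sub: assumes sub: "subcat X T" and ep: "enough_projectives X"
  shows "T \<subseteq> TX X T"
proof
  fix T1 assume T1: "T1 \<in> T"
  obtain Z where Z: "Z \<in> T" "is_zero_obj X Z" using sub unfolding subcat_def by blast
  have ZO: "Z \<in> Obj X" using Z unfolding is_zero_obj_def by auto
  have T1O: "T1 \<in> Obj X" using sub T1 unfolding subcat_def by blast
  have zt: "\<And>A. A \<in> Obj X \<Longrightarrow> etri X Z A A"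
    using etriI ezero_ee mzero_hom id_hom et2_split biprod_Z2 Z(2) ZO by metis
  have Zp: "Z \<in> perp X T" unfolding perp_def Ehi_vanishes_def Ehi_def
    using ZO EE_zero[OF Z(2)] Omega_pow_obj[OF ep] sub unfolding subcat_def by blast
  define KK where "KK = (\<lambda>i::nat. if i = 0 then T1 else Z)"
  have "\<forall>i. KK i \<in> T \<and> KK (Suc i) \<in> perp X T \<and> etri X (KK (Suc i)) (KK i) (KK i)"
    unfolding KK_def using T1 Z Zp zt T1O ZO by auto
  moreover have "KK 0 = T1" unfolding KK_def by simp
  ultimately show "T1 \<in> TX X T" unfolding TX_def using T1O by blast
qed

end

theorem lemma4p6:
  fixes X :: "('o,'m,'e) extri_data" and T :: "'o set" and n :: nat
  assumes "extriangulated X"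
    and "krull_schmidt X"
    and "enough_projectives X"
    and "enough_injectives X"
    and "subcat X T"
    and "self_orthogonal X T"
  shows "Pres X n T = Pres X n (TX X T)"
proof -
  interpret xt X using assms(1) by unfold_locales
  show ?thesis using main_sup[OF assms(5)] Pres_mono[OF main_sub[OF assms(5) assms(3)]] by blast
qed

end
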